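(* Let $L\ge 2$ and let $\Theta$ be a model, i.e. a set of probability vectors $(p_x)_{x\in\{0,1\}^L}$ with $p_x>0$ for all $x$ and $\sum_x p_x=1$. If $\Theta$ admits a consistent population size estimator, then there exists a function $f$ such that $p_{\mathbf{0}} = f\big((q_x)_{x\neq \mathbf{0}}\big)$ for all $(p_x)_{x\in\{0,1\}^L}\in\Theta$, where $q_x = p_x/(1-p_{\mathbf{0}})$ for $x\neq\mathbf{0}$.
   Context: Multiple systems estimation setting: there are $L$ lists and a population of individuals $i=1,2,3,\dots$. Each individual has a list inclusion pattern $W_i=(W_{i,1},\dots,W_{i,L})\in\{0,1\}^L$, with $W_{i,j}=1$ iff individual $i$ appears on list $j$; $\mathbf{0}=(0,\dots,0)$ means unobserved. The $W_i$ are independent and identically distributed with $\mathbb{P}(W_i=x)=p_x$. For a population of size $N$ the observed data are the counts $n_x^{(N)}=\#\{i\le N: W_i=x\}$ for $x\in\{0,1\}^L\setminus\{\mathbf{0}\}$. A population size estimator $\hat N$ is a function of the observed counts $(n_x)_{x\neq\mathbf{0}}$. It is consistent for a model $\Theta$ if, whenever $(p_x)\in\Theta$, $\hat N\big((n_x^{(N)})_{x\neq\mathbf{0}}\big)/N\to 1$ almost surely as $N\to\infty$. *)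

theory Defs
  imports "HOL-Probability.Probability"
begin

text \<open>List inclusion patterns x in {0,1}^L, encoded as boolean lists of length L.\<close>
definition patterns :: "nat \<Rightarrow> bool list set" where
  "patterns L = {xs. length xs = L}"

definition zero_pat :: "nat \<Rightarrow> bool list" where
  "zero_pat L = replicate L False"

definition prob_vector :: "nat \<Rightarrow> (bool list \<Rightarrow> real) \<Rightarrow> bool" where
  "prob_vector L p \<longleftrightarrow> (\<forall>x\<in>patterns L. p x > 0) \<and> (\<Sum>x\<in>patterns L. p x) = 1"

definition pattern_pmf :: "nat \<Rightarrow> (bool list \<Rightarrow> real) \<Rightarrow> bool list pmf" where
  "pattern_pmf L p = embed_pmf (\<lambda>x. if x \<in> patterns L then p x else 0)"

definition iid_law :: "nat \<Rightarrow> (bool list \<Rightarrow> real) \<Rightarrow> (nat \<Rightarrow> bool list) measure" where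
  "iid_law L p = (\<Pi>\<^sub>M i\<in>UNIV. measure_pmf (pattern_pmf L p))"

definition obs_counts :: "nat \<Rightarrow> (nat \<Rightarrow> bool list) \<Rightarrow> nat \<Rightarrow> bool list \<Rightarrow> nat" where
  "obs_counts L w N = (\<lambda>x. if x \<in> patterns L - {zero_pat L} then card {i. i < N \<and> w i = x} else 0)"

definition consistent_estimator ::
  "nat \<Rightarrow> (bool list \<Rightarrow> real) set \<Rightarrow> ((bool list \<Rightarrow> nat) \<Rightarrow> real) \<Rightarrow> bool" where
  "consistent_estimator L \<Theta> Nhat \<longleftrightarrow>
     (\<forall>p\<in>\<Theta>. AE w in iid_law L p. (\<lambda>N. Nhat (obs_counts L w N) / real N) \<longlonglongrightarrow> 1)"

definition qvec :: "nat \<Rightarrow> (bool list \<Rightarrow> real) \<Rightarrow> bool list \<Rightarrow> real" where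
  "qvec L p = (\<lambda>x. if x \<in> patterns L - {zero_pat L} then p x / (1 - p (zero_pat L)) else 0)"

end

theory Submission
  imports Defs
begin


lemma finite_patterns: "finite (patterns L)"
  unfolding patterns_def using finite_lists_length_eq[of "UNIV::bool set" L] by simp

lemma zero_in_patterns: "zero_pat L \<in> patterns L"
  by (simp add: patterns_def zero_pat_def)

lemma pmf_pattern:
  assumes "prob_vector L p"
  shows "pmf (pattern_pmf L p) x = (if x \<in> patterns L then p x else 0)"
  unfolding pattern_pmf_def
proof (rule pmf_embed_pmf)
  show "\<And>x. 0 \<le> (if x \<in> patterns L then p x else 0)"
    using assms unfolding prob_vector_def by (auto intro: less_imp_le)
  have "(\<integral>\<^sup>+x. ennreal (if x \<in> patterns L then p x else 0) \<partial>count_space UNIV)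
      = (\<Sum>x\<in>patterns L. ennreal (if x \<in> patterns L then p x else 0))"
    by (rule nn_integral_count_space') (auto simp: finite_patterns)
  also have "\<dots> = (\<Sum>x\<in>patterns L. ennreal (p x))"
    by (intro sum.cong) auto
  also have "\<dots> = ennreal (\<Sum>x\<in>patterns L. p x)"
    using assms unfolding prob_vector_def by (intro sum_ennreal) (auto intro: less_imp_le)
  also have "\<dots> = 1" using assms unfolding prob_vector_def by simp
  finally show "(\<integral>\<^sup>+x. ennreal (if x \<in> patterns L then p x else 0) \<partial>count_space UNIV) = 1" .
qed

definition nxtS :: "'a set \<Rightarrow> 'a stream \<Rightarrow> nat" where
  "nxtS S s = (LEAST i. s !! i \<in> S)"

primcorec obs :: "'a set \<Rightarrow> 'a stream \<Rightarrow> 'a stream" where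
  "shd (obs S s) = s !! nxtS S s"
| "stl (obs S s) = obs S (sdrop (Suc (nxtS S s)) s)"

definition infS :: "'a set \<Rightarrow> 'a stream \<Rightarrow> bool" where
  "infS S s \<longleftrightarrow> (\<forall>n. \<exists>i\<ge>n. s !! i \<in> S)"

lemma obs_Cons_in: "t \<in> S \<Longrightarrow> obs S (t ## s) = t ## obs S s"
proof -
  assume t: "t \<in> S"
  have "nxtS S (t ## s) = 0" unfolding nxtS_def using t by (intro Least_eq_0) simp
  then show ?thesis by (subst obs.ctr) simp
qed

lemma obs_Cons_notin: "t \<notin> S \<Longrightarrow> \<exists>i. s !! i \<in> S \<Longrightarrow> obs S (t ## s) = obs S s"
proof -
  assume t: "t \<notin> S" and ex: "\<exists>i. s !! i \<in> S"
  then obtain i where i: "s !! i \<in> S" by blast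
  have "(LEAST j. (t ## s) !! j \<in> S) = Suc (LEAST m. (t ## s) !! Suc m \<in> S)"
    by (rule Least_Suc[where n = "Suc i"]) (use i t in auto)
  then have "nxtS S (t ## s) = Suc (nxtS S s)" unfolding nxtS_def by simp
  then show ?thesis by (subst (1 2) obs.ctr) simp
qed

lemma infS_Cons[simp]: "infS S (t ## s) \<longleftrightarrow> infS S s"
  unfolding infS_def
proof
  assume H: "\<forall>n. \<exists>i\<ge>n. (t ## s) !! i \<in> S"
  show "\<forall>n. \<exists>i\<ge>n. s !! i \<in> S"
  proof
    fix n obtain i where "i \<ge> Suc n" "(t ## s) !! i \<in> S" using H by blast
    then show "\<exists>i\<ge>n. s !! i \<in> S" by (intro exI[of _ "i - 1"]) (cases i, auto)
  qed
next
  assume H: "\<forall>n. \<exists>i\<ge>n. s !! i \<in> S"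
  show "\<forall>n. \<exists>i\<ge>n. (t ## s) !! i \<in> S"
  proof
    fix n obtain i where "i \<ge> n" "s !! i \<in> S" using H by blast
    then show "\<exists>i\<ge>n. (t ## s) !! i \<in> S" by (intro exI[of _ "Suc i"]) auto
  qed
qed

lemma infS_sdrop: "infS S s \<Longrightarrow> infS S (sdrop k s)"
  by (induction k arbitrary: s) (auto, metis infS_Cons stream.collapse)

lemma infS_ex: "infS S s \<Longrightarrow> \<exists>i. s !! i \<in> S"
  unfolding infS_def by blast

lemma obs_snth_in: "infS S s \<Longrightarrow> obs S s !! n \<in> S"
proof (induction n arbitrary: s)
  case 0
  have "s !! nxtS S s \<in> S" unfolding nxtS_def using infS_ex[OF 0] by (rule LeastI_ex)
  then show ?case by simp
next
  case (Suc n)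
  then show ?case using Suc.IH[OF infS_sdrop[OF Suc.prems, of "Suc (nxtS S s)"]] by simp
qed

lemma obs_streams: "infS S s \<Longrightarrow> obs S s \<in> streams S"
  using obs_snth_in by (auto simp: streams_iff_snth)

lemma stake_filter_obs:
  "infS S s \<Longrightarrow> filter (\<lambda>y. y \<in> S) (stake N s) = stake (length (filter (\<lambda>y. y \<in> S) (stake N s))) (obs S s)"
proof (induction N arbitrary: s)
  case 0
  then show ?case by simp
next
  case (Suc N)
  obtain t s' where s: "s = t ## s'" by (cases s)
  have i: "infS S s'" using Suc.prems s by simp
  show ?case
  proof (cases "t \<in> S")
    case True
    then show ?thesis using Suc.IH[OF i] s by (simp add: obs_Cons_in)
  next
    case False
    then show ?thesis using Suc.IH[OF i] s infS_ex[OF i] by (simp add: obs_Cons_notin)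
  qed
qed

lemma pred_snth_in[measurable]:
  "Measurable.pred (stream_space (count_space UNIV)) (\<lambda>s. s !! i \<in> S)"
  by (rule measurable_compose[OF measurable_snth]) simp

lemma measurable_nxtS[measurable]:
  "nxtS S \<in> measurable (stream_space (count_space UNIV)) (count_space UNIV)"
  unfolding nxtS_def by measurable

lemma measurable_infS[measurable]:
  "Measurable.pred (stream_space (count_space UNIV)) (infS S)"
  unfolding infS_def by measurable

lemma measurable_obs[measurable]:
  "obs S \<in> measurable (stream_space (count_space UNIV)) (stream_space (count_space (UNIV::'a::countable set)))"
proof -
  let ?N = "stream_space (count_space (UNIV::'a set))"
  have "(\<lambda>x. obs S (id x)) \<in> measurable ?N ?N"
  proof (rule measurable_stream_coinduct[where F = "\<lambda>f. \<exists>g \<in> measurable ?N ?N. f = (\<lambda>x. obs S (g x))"])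
    show "\<exists>g\<in>measurable ?N ?N. (\<lambda>x. obs S (id x)) = (\<lambda>x. obs S (g x))"
      by (intro bexI[of _ id]) auto
  next
    fix f assume "\<exists>g\<in>measurable ?N ?N. f = (\<lambda>x. obs S (g x))"
    then obtain g where g[measurable]: "g \<in> measurable ?N ?N" and f: "f = (\<lambda>x. obs S (g x))" by blast
    have "(\<lambda>x. g x !! nxtS S (g x)) \<in> measurable ?N (count_space UNIV)"
      by (rule measurable_compose_countable[where f = "\<lambda>i x. g x !! i" and g = "\<lambda>x. nxtS S (g x)"])
         (auto intro: measurable_compose[OF g measurable_snth] measurable_compose[OF g measurable_nxtS])
    then show "(\<lambda>x. shd (f x)) \<in> measurable ?N (count_space UNIV)" unfolding f by simp
  next
    fix f assume "\<exists>g\<in>measurable ?N ?N. f = (\<lambda>x. obs S (g x))"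
    then obtain g where g[measurable]: "g \<in> measurable ?N ?N" and f: "f = (\<lambda>x. obs S (g x))" by blast
    have "(\<lambda>x. sdrop (Suc (nxtS S (g x))) (g x)) \<in> measurable ?N ?N"
      by (rule measurable_compose_countable[where f = "\<lambda>i x. sdrop (Suc i) (g x)" and g = "\<lambda>x. nxtS S (g x)"])
         (auto intro: measurable_compose[OF g measurable_sdrop] measurable_compose[OF g measurable_nxtS])
    then show "\<exists>g\<in>measurable ?N ?N. (\<lambda>x. stl (f x)) = (\<lambda>x. obs S (g x))"
      unfolding f by (intro bexI[of _ "\<lambda>x. sdrop (Suc (nxtS S (g x))) (g x)"]) auto
  qed
  then show ?thesis by simp
qed



definition Sset :: "nat \<Rightarrow> bool list set" where
  "Sset L = patterns L - {zero_pat L}"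

lemma finite_Sset: "finite (Sset L)"
  unfolding Sset_def using finite_patterns by simp

abbreviation Pm :: "nat \<Rightarrow> (bool list \<Rightarrow> real) \<Rightarrow> bool list measure" where
  "Pm L p \<equiv> measure_pmf (pattern_pmf L p)"

abbreviation Sp :: "nat \<Rightarrow> (bool list \<Rightarrow> real) \<Rightarrow> bool list stream measure" where
  "Sp L p \<equiv> stream_space (Pm L p)"

lemma sets_Sp[measurable_cong]: "sets (Sp L p) = sets (stream_space (count_space UNIV))"
  by (rule sets_stream_space_cong) simp

lemma space_Sp: "space (Sp L p) = UNIV"
  by (simp add: space_stream_space)

lemma prob_space_Sp: "prob_space (Sp L p)"
  by (rule prob_space.prob_space_stream_space) (rule measure_pmf.prob_space_axioms)

definition bprob :: "nat \<Rightarrow> (bool list \<Rightarrow> real) \<Rightarrow> bool list list \<Rightarrow> real" where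
  "bprob L p xs = measure (Sp L p) {s \<in> space (Sp L p). obs (Sset L) s \<in> sstart (Sset L) xs}"

lemma set_pmf_pattern:
  assumes "prob_vector L p"
  shows "set_pmf (pattern_pmf L p) = patterns L"
  using assms by (auto simp: set_pmf_eq pmf_pattern prob_vector_def dest: less_imp_neq[symmetric] split: if_splits)

lemma obs_meas[measurable]: "{s \<in> space (Sp L p). obs (Sset L) s \<in> A} \<in> sets (Sp L p)"
  if "A \<in> sets (stream_space (count_space UNIV))"
proof -
  have "obs (Sset L) \<in> measurable (Sp L p) (stream_space (count_space UNIV))"
    by (subst measurable_cong_sets[OF sets_Sp refl]) (rule measurable_obs)
  then show ?thesis using that by (simp add: measurable_sets pred_def)
qed

lemma bprob_Nil:
  assumes "AE s in Sp L p. infS (Sset L) s"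
  shows "bprob L p [] = 1"
proof -
  interpret S: prob_space "Sp L p" by (rule prob_space_Sp)
  have "measure (Sp L p) {s \<in> space (Sp L p). obs (Sset L) s \<in> streams (Sset L)} = measure (Sp L p) (space (Sp L p))"
    apply (rule measure_eq_AE)
    using assms apply (auto elim!: eventually_mono simp: obs_streams)
    apply (rule obs_meas) apply (rule streams_sets) by simp
  then show ?thesis unfolding bprob_def by (simp add: S.prob_space)
qed

lemma obs_meas2[measurable]: "{s \<in> space (Sp L p). obs (Sset L) (t ## s) \<in> A} \<in> sets (Sp L p)"
  if "A \<in> sets (stream_space (count_space UNIV))"
proof -
  have "(\<lambda>s. obs (Sset L) (t ## s)) \<in> measurable (stream_space (count_space UNIV)) (stream_space (count_space UNIV))"
    by (rule measurable_compose[OF _ measurable_obs]) simp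
  then have "(\<lambda>s. obs (Sset L) (t ## s)) \<in> measurable (Sp L p) (stream_space (count_space UNIV))"
    by (subst measurable_cong_sets[OF sets_Sp refl])
  then show ?thesis using that by (simp add: measurable_sets pred_def)
qed

lemma bprob_Cons:
  assumes pv: "prob_vector L p" and ae: "AE s in Sp L p. infS (Sset L) s" and x: "x \<in> Sset L"
  shows "bprob L p (x # xs) = qvec L p x * bprob L p xs"
proof -
  interpret S: prob_space "Sp L p" by (rule prob_space_Sp)
  define S where "S = Sset L"
  define z where "z = zero_pat L"
  define b1 where "b1 = bprob L p (x#xs)"
  define b0 where "b0 = bprob L p xs"
  define g where "g t = (if t \<in> S then (if t = x then b0 else 0) else b1)" for t
  have g_nn: "0 \<le> g t" for t unfolding g_def b0_def b1_def bprob_def by auto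
  have p_nn: "t \<in> patterns L \<Longrightarrow> 0 \<le> p t" for t using pv unfolding prob_vector_def by (auto intro: less_imp_le)
  have step: "ennreal b1 = (\<integral>\<^sup>+t. ennreal (measure (Sp L p) {s \<in> space (Sp L p). obs S (t ## s) \<in> sstart S (x#xs)}) \<partial>Pm L p)"
    unfolding b1_def bprob_def S_def
    by (rule prob_space.prob_stream_space[OF measure_pmf.prob_space_axioms]) (rule obs_meas, rule sstart_sets)
  have gt: "measure (Sp L p) {s \<in> space (Sp L p). obs S (t ## s) \<in> sstart S (x#xs)} = g t" for t
  proof (cases "t \<in> S")
    case True
    then show ?thesis by (cases "t = x") (simp_all add: g_def obs_Cons_in b0_def bprob_def S_def)
  next
    case False
    have "measure (Sp L p) {s \<in> space (Sp L p). obs S (t ## s) \<in> sstart S (x#xs)} = measure (Sp L p) {s \<in> space (Sp L p). obs S s \<in> sstart S (x#xs)}"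
    proof (rule measure_eq_AE)
      show "AE s in Sp L p. (s \<in> {s \<in> space (Sp L p). obs S (t ## s) \<in> sstart S (x#xs)}) = (s \<in> {s \<in> space (Sp L p). obs S s \<in> sstart S (x#xs)})"
        using ae
      proof (rule AE_mp, intro AE_I2 impI)
        fix s assume "infS (Sset L) s"
        then have eq: "obs S (t ## s) = obs S s" using obs_Cons_notin[OF False infS_ex] S_def by simp
        show "(s \<in> {s \<in> space (Sp L p). obs S (t ## s) \<in> sstart S (x#xs)}) = (s \<in> {s \<in> space (Sp L p). obs S s \<in> sstart S (x#xs)})"
          by (simp only: mem_Collect_eq eq)
      qed
    qed (unfold S_def, (rule obs_meas2 obs_meas, rule sstart_sets)+)
    then show ?thesis using False by (simp add: g_def b1_def bprob_def S_def)
  qed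
  have "ennreal b1 = (\<integral>\<^sup>+t. ennreal (g t) \<partial>Pm L p)" using step gt by simp
  also have "\<dots> = (\<Sum>t\<in>patterns L. ennreal (g t) * pmf (pattern_pmf L p) t)"
    by (subst nn_integral_measure_pmf_finite) (simp_all add: set_pmf_pattern[OF pv] finite_patterns)
  also have "\<dots> = (\<Sum>t\<in>patterns L. ennreal (g t * p t))"
    by (intro sum.cong refl) (simp add: pmf_pattern[OF pv] ennreal_mult g_nn p_nn)
  also have "\<dots> = ennreal (\<Sum>t\<in>patterns L. g t * p t)"
    by (rule sum_ennreal) (simp add: g_nn p_nn)
  finally have eq1: "b1 = (\<Sum>t\<in>patterns L. g t * p t)"
    by (subst (asm) ennreal_inj) (auto simp: b1_def bprob_def intro!: sum_nonneg mult_nonneg_nonneg g_nn p_nn)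
  have xz: "x \<noteq> z" "x \<in> patterns L" using x by (auto simp: Sset_def z_def)
  have "(\<Sum>t\<in>patterns L. g t * p t) = (\<Sum>t\<in>patterns L. (if t = z then b1 * p t else 0) + (if t = x then b0 * p t else 0))"
    by (intro sum.cong refl) (use xz[unfolded z_def] in \<open>auto simp: g_def S_def Sset_def z_def\<close>)
  also have "\<dots> = (\<Sum>t\<in>patterns L. (if t = z then b1 * p t else 0)) + (\<Sum>t\<in>patterns L. (if t = x then b0 * p t else 0))"
    by (rule sum.distrib)
  also have "(\<Sum>t\<in>patterns L. (if t = z then b1 * p t else 0)) = b1 * p z"
    using zero_in_patterns[of L] unfolding z_def by (simp add: sum.delta[OF finite_patterns])
  also have "(\<Sum>t\<in>patterns L. (if t = x then b0 * p t else 0)) = b0 * p x"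
    using xz by (simp add: sum.delta[OF finite_patterns])
  finally have eq: "b1 = b1 * p z + b0 * p x" using eq1 by simp
  have "(\<Sum>t\<in>{z, x}. p t) \<le> (\<Sum>t\<in>patterns L. p t)"
    by (rule sum_mono2[OF finite_patterns]) (auto simp: xz z_def zero_in_patterns p_nn)
  then have "p z + p x \<le> 1" using pv xz by (simp add: prob_vector_def)
  moreover have "p x > 0" using pv xz by (simp add: prob_vector_def)
  ultimately have pz: "1 - p z > 0" by simp
  have q: "qvec L p x = p x / (1 - p z)" using xz by (simp add: qvec_def z_def)
  from eq have "b1 * (1 - p z) = b0 * p x" by (simp add: algebra_simps)
  then have "b1 = p x / (1 - p z) * b0" using pz by (simp add: field_simps)
  then show ?thesis unfolding b1_def b0_def q .
qed

lemma obs_measurable_Sp: "obs (Sset L) \<in> measurable (Sp L p) (stream_space (count_space UNIV))"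
  by (subst measurable_cong_sets[OF sets_Sp refl]) (rule measurable_obs)

abbreviation Np :: "nat \<Rightarrow> (bool list \<Rightarrow> real) \<Rightarrow> bool list stream measure" where
  "Np L p \<equiv> distr (Sp L p) (stream_space (count_space UNIV)) (obs (Sset L))"

lemma emeasure_Np_sstart: "emeasure (Np L p) (sstart (Sset L) xs) = ennreal (bprob L p xs)"
proof -
  interpret S: prob_space "Sp L p" by (rule prob_space_Sp)
  have "emeasure (Np L p) (sstart (Sset L) xs) = emeasure (Sp L p) (obs (Sset L) -` sstart (Sset L) xs \<inter> space (Sp L p))"
    by (rule emeasure_distr[OF obs_measurable_Sp sstart_sets])
  also have "obs (Sset L) -` sstart (Sset L) xs \<inter> space (Sp L p) = {s \<in> space (Sp L p). obs (Sset L) s \<in> sstart (Sset L) xs}"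
    by auto
  finally show ?thesis unfolding bprob_def by (simp add: S.emeasure_eq_measure)
qed

lemma Np_eq:
  assumes pv: "prob_vector L p" and pv': "prob_vector L p'"
    and ae: "AE s in Sp L p. infS (Sset L) s" and ae': "AE s in Sp L p'. infS (Sset L) s"
    and q: "\<forall>x\<in>Sset L. qvec L p x = qvec L p' x"
  shows "Np L p = Np L p'"
proof -
  have b: "bprob L p xs = bprob L p' xs" if "xs \<in> lists (Sset L)" for xs
    using that
  proof (induction xs)
    case Nil
    then show ?case using bprob_Nil[OF ae] bprob_Nil[OF ae'] by simp
  next
    case (Cons x xs)
    then show ?case using bprob_Cons[OF pv ae, of x xs] bprob_Cons[OF pv' ae', of x xs] q by simp
  qed
  have aeN: "AE x in Np L r. x \<in> streams (Sset L)" if "AE s in Sp L r. infS (Sset L) s" for r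
  proof -
    have "AE s in Sp L r. obs (Sset L) s \<in> streams (Sset L)"
      using that by (auto elim!: eventually_mono simp: obs_streams)
    moreover have "{x \<in> space (stream_space (count_space UNIV)). x \<in> streams (Sset L)} = streams (Sset L)"
      by (auto simp: space_stream_space intro: streams_mono)
    moreover have "streams (Sset L) \<in> sets (stream_space (count_space UNIV))"
      by (rule streams_sets) simp
    ultimately show ?thesis
      by (subst AE_distr_iff[OF obs_measurable_Sp]) auto
  qed
  show ?thesis
  proof (rule stream_space_eq_sstart[where S = "Sset L"])
    show "countable (Sset L)" by (rule countable_finite[OF finite_Sset])
    show "prob_space (Np L p)" by (rule prob_space.prob_space_distr[OF prob_space_Sp obs_measurable_Sp])
    show "prob_space (Np L p')" by (rule prob_space.prob_space_distr[OF prob_space_Sp obs_measurable_Sp])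
    show "AE x in Np L p. x \<in> streams (Sset L)" by (rule aeN[OF ae])
    show "AE x in Np L p'. x \<in> streams (Sset L)" by (rule aeN[OF ae'])
  qed (simp_all add: emeasure_Np_sstart b)
qed



lemma sum_ind_card: "(\<Sum>i<(N::nat). if P i then 1 else 0::real) = real (card {i. i < N \<and> P i})"
proof (induction N)
  case 0 then show ?case by simp
next
  case (Suc N)
  have "{i. i < Suc N \<and> P i} = {i. i < N \<and> P i} \<union> (if P N then {N} else {})" by (auto simp: less_Suc_eq)
  then show ?case using Suc by (auto simp: card_insert_if)
qed

lemma prob_space_iid: "prob_space (iid_law L p)"
  unfolding iid_law_def by (rule prob_space_PiM) (rule measure_pmf.prob_space_axioms)

lemma pred_iid_comp[measurable]: "Measurable.pred (iid_law L p) (\<lambda>\<omega>. \<omega> i \<in> S)"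
  unfolding iid_law_def by (rule measurable_compose[OF measurable_component_singleton]) simp_all

lemma indep_components:
  "prob_space.indep_vars (iid_law L p) (\<lambda>_. Pm L p) (\<lambda>i \<omega>. \<omega> i) I"
proof -
  interpret P: prob_space "iid_law L p" by (rule prob_space_iid)
  show ?thesis
  proof (cases "I = {}")
    case True
    then show ?thesis unfolding P.indep_vars_def2 by (simp add: P.indep_sets_def)
  next
    case False
    have rv: "P.random_variable (Pm L p) (\<lambda>\<omega>. \<omega> i)" for i
      unfolding iid_law_def by (rule measurable_component_singleton) simp
    have "distr (iid_law L p) (\<Pi>\<^sub>M i\<in>I. Pm L p) (\<lambda>x. \<lambda>i\<in>I. x i) = (\<Pi>\<^sub>M i\<in>I. Pm L p)"
      using distr_PiM_reindex[of UNIV "\<lambda>_. Pm L p" id I] unfolding iid_law_def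
      by (simp add: measure_pmf.prob_space_axioms)
    also have "\<dots> = (\<Pi>\<^sub>M i\<in>I. distr (iid_law L p) (Pm L p) (\<lambda>\<omega>. \<omega> i))"
      unfolding iid_law_def
      by (intro PiM_cong refl) (rule distr_PiM_component[of UNIV "\<lambda>_. Pm L p", symmetric], simp_all add: measure_pmf.prob_space_axioms)
    finally show ?thesis
      by (subst P.indep_vars_iff_distr_eq_PiM[OF False rv])
  qed
qed

definition Xf :: "nat \<Rightarrow> nat \<Rightarrow> (nat \<Rightarrow> bool list) \<Rightarrow> real" where
  "Xf L i \<omega> = (if \<omega> i \<in> Sset L then 1 else 0)"

lemma Xf_measurable[measurable]: "Xf L i \<in> borel_measurable (iid_law L p)"
  unfolding Xf_def by measurable

lemma distr_Xf: "distr (iid_law L p) borel (Xf L i) = distr (Pm L p) borel (\<lambda>x. if x \<in> Sset L then 1 else 0)"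
proof -
  have comp: "(\<lambda>\<omega>. \<omega> i) \<in> measurable (iid_law L p) (Pm L p)"
    unfolding iid_law_def by (rule measurable_component_singleton) simp
  have "distr (iid_law L p) borel (Xf L i) = distr (distr (iid_law L p) (Pm L p) (\<lambda>\<omega>. \<omega> i)) borel (\<lambda>x. if x \<in> Sset L then 1 else 0)"
    by (subst distr_distr[OF _ comp]) (simp_all add: Xf_def[abs_def] comp_def borel_measurable_count_space measurable_cong_sets[OF sets_measure_pmf_count_space refl])
  also have "distr (iid_law L p) (Pm L p) (\<lambda>\<omega>. \<omega> i) = Pm L p"
    unfolding iid_law_def by (rule distr_PiM_component[of UNIV "\<lambda>_. Pm L p"]) (simp_all add: measure_pmf.prob_space_axioms)
  finally show ?thesis .
qed

lemma expectation_Xf: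
  assumes pv: "prob_vector L p"
  shows "prob_space.expectation (iid_law L p) (Xf L 0) = 1 - p (zero_pat L)"
proof -
  have "integral\<^sup>L (iid_law L p) (Xf L 0) = integral\<^sup>L (distr (iid_law L p) borel (Xf L 0)) (\<lambda>x. x)"
    by (rule integral_distr[symmetric]) simp_all
  also have "\<dots> = integral\<^sup>L (distr (Pm L p) borel (\<lambda>x. if x \<in> Sset L then 1 else 0)) (\<lambda>x. x)"
    by (simp add: distr_Xf)
  also have "\<dots> = integral\<^sup>L (Pm L p) (\<lambda>x. if x \<in> Sset L then 1 else 0)"
    by (rule integral_distr) (simp_all add: borel_measurable_count_space measurable_cong_sets[OF sets_measure_pmf_count_space refl])
  also have "\<dots> = (\<Sum>a\<in>Sset L. (if a \<in> Sset L then 1 else 0) * pmf (pattern_pmf L p) a)"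
    by (rule integral_measure_pmf_real) (auto simp: finite_Sset split: if_splits)
  also have "\<dots> = (\<Sum>a\<in>Sset L. p a)"
    by (intro sum.cong refl) (simp add: pmf_pattern[OF pv] Sset_def)
  also have "\<dots> = (\<Sum>a\<in>patterns L. p a) - p (zero_pat L)"
    unfolding Sset_def by (simp add: sum_diff1 finite_patterns zero_in_patterns)
  also have "\<dots> = 1 - p (zero_pat L)" using pv by (simp add: prob_vector_def)
  finally show ?thesis .
qed

lemma hoeff_bound:
  assumes pv: "prob_vector L p" and eps: "\<epsilon> \<ge> 0"
  shows "measure (iid_law L p) {\<omega> \<in> space (iid_law L p). \<bar>(\<Sum>i\<in>{..<Suc n}. Xf L i \<omega>) / real (card {..<Suc n}) - (1 - p (zero_pat L))\<bar> \<ge> \<epsilon>}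
     \<le> 2 * exp (-2 * real (card {..<Suc n}) * \<epsilon>\<^sup>2 / (1 - 0)\<^sup>2)"
proof -
  interpret P: prob_space "iid_law L p" by (rule prob_space_iid)
  have ind: "P.indep_vars (\<lambda>_. borel) (\<lambda>i \<omega>. (\<lambda>x. if x \<in> Sset L then 1 else 0::real) (\<omega> i)) {..<Suc n}"
    by (rule P.indep_vars_compose2[OF indep_components])
       (simp add: borel_measurable_count_space measurable_cong_sets[OF sets_measure_pmf_count_space refl])
  interpret H: Hoeffding_ineq_iid "iid_law L p" "{..<Suc n}" "Xf L" "Xf L 0" 0 1 "1 - p (zero_pat L)"
  proof unfold_locales
    show "P.indep_vars (\<lambda>_. borel) (Xf L) {..<Suc n}" using ind unfolding Xf_def[abs_def] .
    show "1 - p (zero_pat L) \<equiv> P.expectation (Xf L 0)" using expectation_Xf[OF pv] by simp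
  qed (auto simp: distr_Xf Xf_def)
  show ?thesis by (rule H.Hoeffding_ineq_abs_ge'[OF eps]) auto
qed

lemma slln:
  assumes pv: "prob_vector L p"
  shows "AE \<omega> in iid_law L p. (\<lambda>N. real (card {i. i < N \<and> \<omega> i \<in> Sset L}) / real N) \<longlonglongrightarrow> 1 - p (zero_pat L)"
proof -
  interpret P: prob_space "iid_law L p" by (rule prob_space_iid)
  define \<mu> where "\<mu> = 1 - p (zero_pat L)"
  have Xsum: "(\<Sum>i\<in>{..<n}. Xf L i \<omega>) = real (card {i. i < n \<and> \<omega> i \<in> Sset L})" for n \<omega>
    unfolding Xf_def by (rule sum_ind_card)
  have ev: "AE \<omega> in iid_law L p. eventually (\<lambda>n. \<bar>real (card {i. i < Suc n \<and> \<omega> i \<in> Sset L}) / real (Suc n) - \<mu>\<bar> < \<epsilon>) sequentially"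
    if eps: "\<epsilon> > 0" for \<epsilon>
  proof -
    define A where "A n = {\<omega> \<in> space (iid_law L p). \<bar>(\<Sum>i\<in>{..<Suc n}. Xf L i \<omega>) / real (card {..<Suc n}) - \<mu>\<bar> \<ge> \<epsilon>}" for n
    have A_meas: "A n \<in> sets (iid_law L p)" for n unfolding A_def by measurable
    define c where "c = exp (-2 * \<epsilon>\<^sup>2)"
    have c: "0 < c" "c < 1" using eps unfolding c_def by (auto simp: power2_eq_square)
    have bound: "norm (measure (iid_law L p) (A n)) \<le> 2 * c * c ^ n" for n
    proof -
      have "measure (iid_law L p) (A n) \<le> 2 * exp (-2 * real (card {..<Suc n}) * \<epsilon>\<^sup>2 / (1 - 0)\<^sup>2)"
        unfolding A_def \<mu>_def by (rule hoeff_bound[OF pv]) (use eps in simp)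
      also have "-2 * real (card {..<Suc n}) * \<epsilon>\<^sup>2 / (1 - 0)\<^sup>2 = real (Suc n) * (-2 * \<epsilon>\<^sup>2)" by (simp add: algebra_simps)
      also have "exp (real (Suc n) * (-2 * \<epsilon>\<^sup>2)) = c ^ Suc n" unfolding c_def by (rule exp_of_nat_mult)
      finally show ?thesis by simp
    qed
    have "summable (\<lambda>n. 2 * c * c ^ n)"
      by (rule summable_mult) (rule summable_geometric, use c in simp)
    then have summ: "summable (\<lambda>n. measure (iid_law L p) (A n))"
      by (rule summable_comparison_test') (rule bound)
    have "AE \<omega> in iid_law L p. eventually (\<lambda>n. \<omega> \<in> space (iid_law L p) - A n) sequentially"
      by (rule borel_cantelli_AE1[OF A_meas _ summ]) (simp add: P.emeasure_eq_measure)
    then show ?thesis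
      by (rule AE_mp, intro AE_I2 impI) (auto elim!: eventually_mono simp: A_def Xsum not_le)
  qed
  have "AE \<omega> in iid_law L p. \<forall>k. eventually (\<lambda>n. \<bar>real (card {i. i < Suc n \<and> \<omega> i \<in> Sset L}) / real (Suc n) - \<mu>\<bar> < inverse (real (Suc k))) sequentially"
    unfolding AE_all_countable by (intro allI ev) simp
  then show ?thesis
  proof (rule AE_mp, intro AE_I2 impI)
    fix \<omega> assume H: "\<forall>k. eventually (\<lambda>n. \<bar>real (card {i. i < Suc n \<and> \<omega> i \<in> Sset L}) / real (Suc n) - \<mu>\<bar> < inverse (real (Suc k))) sequentially"
    have "(\<lambda>n. real (card {i. i < Suc n \<and> \<omega> i \<in> Sset L}) / real (Suc n)) \<longlonglongrightarrow> \<mu>"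
    proof (rule tendstoI)
      fix e :: real assume e: "e > 0"
      obtain m where m: "m > 0" "inverse (real m) < e" using ex_inverse_of_nat_less[OF e] by auto
      have "Suc (m - 1) = m" using m by simp
      then have "eventually (\<lambda>n. \<bar>real (card {i. i < Suc n \<and> \<omega> i \<in> Sset L}) / real (Suc n) - \<mu>\<bar> < inverse (real m)) sequentially"
        using H[rule_format, of "m - 1"] by simp
      then show "eventually (\<lambda>n. dist (real (card {i. i < Suc n \<and> \<omega> i \<in> Sset L}) / real (Suc n)) \<mu> < e) sequentially"
        by (rule eventually_mono) (use m in \<open>simp add: dist_real_def\<close>)
    qed
    then show "(\<lambda>N. real (card {i. i < N \<and> \<omega> i \<in> Sset L}) / real N) \<longlonglongrightarrow> 1 - p (zero_pat L)"
      unfolding \<mu>_def by (rule filterlim_sequentially_Suc[THEN iffD1])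
  qed
qed



lemma iid_law_distr: "iid_law L p = distr (Sp L p) (\<Pi>\<^sub>M i\<in>UNIV. Pm L p) (\<lambda>s n. s !! n)"
proof -
  have "distr (Sp L p) (\<Pi>\<^sub>M i\<in>UNIV. Pm L p) (\<lambda>s n. s !! n)
      = distr (distr (\<Pi>\<^sub>M i\<in>UNIV. Pm L p) (Sp L p) to_stream) (\<Pi>\<^sub>M i\<in>UNIV. Pm L p) (\<lambda>s n. s !! n)"
    by (subst stream_space_eq_distr[of "Pm L p"]) simp
  also have "\<dots> = distr (\<Pi>\<^sub>M i\<in>UNIV. Pm L p) (\<Pi>\<^sub>M i\<in>UNIV. Pm L p) ((\<lambda>s n. s !! n) \<circ> to_stream)"
    by (rule distr_distr) (simp_all add: measurable_snth_PiM)
  also have "\<dots> = distr (\<Pi>\<^sub>M i\<in>UNIV. Pm L p) (\<Pi>\<^sub>M i\<in>UNIV. Pm L p) (\<lambda>x. x)"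
    by (rule distr_cong) (auto simp: to_stream_def fun_eq_iff)
  also have "\<dots> = (\<Pi>\<^sub>M i\<in>UNIV. Pm L p)" by (rule distr_id)
  finally show ?thesis unfolding iid_law_def by simp
qed

lemma AE_iid_to_Sp:
  assumes "AE w in iid_law L p. P w"
  shows "AE s in Sp L p. P (\<lambda>n. s !! n)"
proof -
  have "AE w in distr (Sp L p) (\<Pi>\<^sub>M i\<in>UNIV. Pm L p) (\<lambda>s n. s !! n). P w"
    using assms by (subst (asm) iid_law_distr)
  then show ?thesis by (rule AE_distrD[rotated]) (rule measurable_snth_PiM)
qed

lemma p0_less_1:
  assumes pv: "prob_vector L p" and L: "L \<ge> 1"
  shows "p (zero_pat L) < 1"
proof -
  define x where "x = True # replicate (L - 1) False"
  obtain m where m: "L = Suc m" using L by (cases L) auto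
  have xz: "x \<noteq> zero_pat L" "x \<in> patterns L" by (auto simp: m x_def zero_pat_def patterns_def)
  have p_nn: "t \<in> patterns L \<Longrightarrow> 0 \<le> p t" for t using pv unfolding prob_vector_def by (auto intro: less_imp_le)
  have "(\<Sum>t\<in>{zero_pat L, x}. p t) \<le> (\<Sum>t\<in>patterns L. p t)"
    by (rule sum_mono2[OF finite_patterns]) (auto simp: xz zero_in_patterns p_nn)
  then have "p (zero_pat L) + p x \<le> 1" using pv xz by (simp add: prob_vector_def)
  moreover have "p x > 0" using pv xz by (simp add: prob_vector_def)
  ultimately show ?thesis by simp
qed

lemma infinite_from_density:
  fixes P :: "nat \<Rightarrow> bool"
  assumes lim: "(\<lambda>N. real (card {i. i < N \<and> P i}) / real N) \<longlonglongrightarrow> \<mu>" and mu: "\<mu> > 0"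
  shows "\<forall>n. \<exists>i\<ge>n. P i"
proof (rule ccontr)
  assume "\<not> (\<forall>n. \<exists>i\<ge>n. P i)"
  then obtain n where n: "\<And>i. i \<ge> n \<Longrightarrow> \<not> P i" by auto
  have le: "real (card {i. i < N \<and> P i}) / real N \<le> real n / real N" for N
  proof -
    have "{i. i < N \<and> P i} \<subseteq> {..<n}" using n by (auto simp: not_le[symmetric])
    then have "card {i. i < N \<and> P i} \<le> n" using card_mono[of "{..<n}"] by fastforce
    then show ?thesis by (simp add: divide_right_mono)
  qed
  have "(\<lambda>N. real n / real N) \<longlonglongrightarrow> 0"
    by (intro tendsto_divide_0[OF tendsto_const] filterlim_at_top_imp_at_infinity[OF filterlim_real_sequentially])
  then have "\<mu> \<le> 0" by (rule tendsto_le[OF trivial_limit_sequentially _ lim]) (intro always_eventually allI le)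
  then show False using mu by simp
qed

lemma AE_infS:
  assumes pv: "prob_vector L p" and L: "L \<ge> 1"
  shows "AE s in Sp L p. infS (Sset L) s"
proof -
  have "AE s in Sp L p. (\<lambda>N. real (card {i. i < N \<and> s !! i \<in> Sset L}) / real N) \<longlonglongrightarrow> 1 - p (zero_pat L)"
    using AE_iid_to_Sp[OF slln[OF pv]] by simp
  then show ?thesis
    by (rule AE_mp, intro AE_I2 impI)
       (unfold infS_def, rule infinite_from_density, assumption, use p0_less_1[OF pv L] in simp)
qed

lemma time_change:
  fixes F :: "nat \<Rightarrow> real" and c :: "nat \<Rightarrow> nat"
  assumes A: "(\<lambda>N. F (c N) / real N) \<longlonglongrightarrow> 1" and B: "(\<lambda>N. real (c N) / real N) \<longlonglongrightarrow> \<mu>"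
    and mu: "\<mu> > 0" and c0: "c 0 = 0" and cS: "\<And>N. c (Suc N) \<le> Suc (c N)"
  shows "(\<lambda>k. F k / real k) \<longlonglongrightarrow> 1 / \<mu>"
proof -
  have cle: "c N \<le> N" for N
  proof (induction N)
    case 0 then show ?case using c0 by simp
  next
    case (Suc N) then show ?case using cS[of N] by simp
  qed
  have "LIM N sequentially. real (c N) / real N * real N :> at_top"
    by (rule filterlim_tendsto_pos_mult_at_top[OF B mu filterlim_real_sequentially])
  moreover have ev: "eventually (\<lambda>N. real (c N) / real N * real N = real (c N)) sequentially"
      using eventually_gt_at_top[of "0::nat"] by (rule eventually_mono) simp
  ultimately have "LIM N sequentially. real (c N) :> at_top"
    using filterlim_cong[OF refl refl ev] by simp
  then have unb: "\<exists>N. k \<le> c N" for k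
    unfolding filterlim_at_top eventually_sequentially by (metis order.refl of_nat_le_iff)
  define Nk where "Nk k = (LEAST N. k \<le> c N)" for k
  have cNk: "c (Nk k) = k" for k
  proof -
    have ge: "k \<le> c (Nk k)" unfolding Nk_def by (rule LeastI_ex[OF unb])
    show ?thesis
    proof (cases "Nk k")
      case 0 then show ?thesis using ge c0 by simp
    next
      case (Suc m)
      have "\<not> k \<le> c m" unfolding Nk_def by (rule not_less_Least) (simp add: Suc[unfolded Nk_def])
      then show ?thesis using ge cS[of m] Suc by simp
    qed
  qed
  have Nk_ge: "k \<le> Nk k" for k using cle[of "Nk k"] cNk[of k] by simp
  have lim_Nk: "filterlim Nk at_top sequentially"
    unfolding filterlim_at_top eventually_sequentially using Nk_ge order.trans by blast
  have A': "(\<lambda>k. F (c (Nk k)) / real (Nk k)) \<longlonglongrightarrow> 1"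
    using filterlim_compose[OF A lim_Nk] by (simp add: o_def)
  have B': "(\<lambda>k. real (c (Nk k)) / real (Nk k)) \<longlonglongrightarrow> \<mu>"
    using filterlim_compose[OF B lim_Nk] by (simp add: o_def)
  have "(\<lambda>k. (F (c (Nk k)) / real (Nk k)) / (real (c (Nk k)) / real (Nk k))) \<longlonglongrightarrow> 1 / \<mu>"
    by (rule tendsto_divide[OF A' B']) (use mu in simp)
  then show ?thesis
  proof (rule Lim_transform_eventually)
    show "eventually (\<lambda>k. (F (c (Nk k)) / real (Nk k)) / (real (c (Nk k)) / real (Nk k)) = F k / real k) sequentially"
      using eventually_gt_at_top[of "0::nat"]
    proof (rule eventually_mono)
      fix k :: nat assume "k > 0"
      then have "Nk k > 0" using Nk_ge[of k] by simp
      then show "(F (c (Nk k)) / real (Nk k)) / (real (c (Nk k)) / real (Nk k)) = F k / real k"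
        by (simp add: cNk)
    qed
  qed
qed

definition cntl :: "nat \<Rightarrow> bool list list \<Rightarrow> bool list \<Rightarrow> nat" where
  "cntl L l = (\<lambda>x. if x \<in> Sset L then length (filter (\<lambda>y. y = x) l) else 0)"

lemma card_stake: "card {i. i < N \<and> P (s !! i)} = length (filter P (stake N s))"
  by (simp add: length_filter_conv_card) (metis (mono_tags, lifting) stake_nth)

lemma obs_counts_eq:
  assumes "infS (Sset L) s"
  shows "obs_counts L (\<lambda>n. s !! n) N = cntl L (stake (card {i. i < N \<and> s !! i \<in> Sset L}) (obs (Sset L) s))"
proof
  fix x
  show "obs_counts L (\<lambda>n. s !! n) N x = cntl L (stake (card {i. i < N \<and> s !! i \<in> Sset L}) (obs (Sset L) s)) x"
  proof (cases "x \<in> Sset L")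
    case True
    have "card {i. i < N \<and> s !! i = x} = length (filter (\<lambda>y. y = x) (stake N s))"
      by (rule card_stake)
    also have "\<dots> = length (filter (\<lambda>y. y = x) (filter (\<lambda>y. y \<in> Sset L) (stake N s)))"
      using True by (simp cong: conj_cong) (metis)
    also have "\<dots> = length (filter (\<lambda>y. y = x) (stake (card {i. i < N \<and> s !! i \<in> Sset L}) (obs (Sset L) s)))"
      by (subst stake_filter_obs[OF assms]) (simp only: card_stake[of N "\<lambda>y. y \<in> Sset L" s])
    finally show ?thesis using True by (simp add: obs_counts_def cntl_def Sset_def)
  next
    case False
    then show ?thesis unfolding obs_counts_def cntl_def Sset_def[symmetric] by simp
  qed
qed



lemma measurable_Fk[measurable]:
  "(\<lambda>ob. Nhat (cntl L (stake k ob)) / real k) \<in> borel_measurable (stream_space (count_space UNIV))"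
  by (rule measurable_compose[OF measurable_stake]) (simp add: borel_measurable_count_space)

lemma card_Suc_le: "card {i. i < Suc N \<and> P i} \<le> Suc (card {i. i < N \<and> P i})"
proof -
  have "{i. i < Suc N \<and> P i} \<subseteq> insert N {i. i < N \<and> P i}" by (auto simp: less_Suc_eq)
  then have "card {i. i < Suc N \<and> P i} \<le> card (insert N {i. i < N \<and> P i})"
    by (rule card_mono[rotated]) simp
  also have "\<dots> \<le> Suc (card {i. i < N \<and> P i})" by (simp add: card_insert_if)
  finally show ?thesis .
qed

lemma main_AE:
  assumes pv: "prob_vector L p" and L: "L \<ge> 1"
    and cons: "AE w in iid_law L p. (\<lambda>N. Nhat (obs_counts L w N) / real N) \<longlonglongrightarrow> 1"
    and eps: "\<epsilon> > 0"
  shows "AE ob in Np L p. \<exists>K. \<forall>k\<ge>K. \<bar>Nhat (cntl L (stake k ob)) / real k - 1 / (1 - p (zero_pat L))\<bar> < \<epsilon>"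
proof -
  define \<mu> where "\<mu> = 1 - p (zero_pat L)"
  have mu: "\<mu> > 0" using p0_less_1[OF pv L] by (simp add: \<mu>_def)
  have ae1: "AE s in Sp L p. (\<lambda>N. Nhat (obs_counts L (\<lambda>n. s !! n) N) / real N) \<longlonglongrightarrow> 1"
    by (rule AE_iid_to_Sp[OF cons])
  have ae2: "AE s in Sp L p. (\<lambda>N. real (card {i. i < N \<and> s !! i \<in> Sset L}) / real N) \<longlonglongrightarrow> \<mu>"
    using AE_iid_to_Sp[OF slln[OF pv]] by (simp add: \<mu>_def)
  have ae3: "AE s in Sp L p. infS (Sset L) s" by (rule AE_infS[OF pv L])
  have "AE s in Sp L p. \<exists>K. \<forall>k\<ge>K. \<bar>Nhat (cntl L (stake k (obs (Sset L) s))) / real k - 1 / \<mu>\<bar> < \<epsilon>"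
    using ae1 ae2 ae3
  proof eventually_elim
    case (elim s)
    define c where "c N = card {i. i < N \<and> s !! i \<in> Sset L}" for N
    define F where "F k = Nhat (cntl L (stake k (obs (Sset L) s)))" for k
    have A: "(\<lambda>N. F (c N) / real N) \<longlonglongrightarrow> 1"
      using elim(1) by (simp add: obs_counts_eq[OF elim(3)] F_def c_def)
    have B: "(\<lambda>N. real (c N) / real N) \<longlonglongrightarrow> \<mu>" using elim(2) by (simp add: c_def)
    have "(\<lambda>k. F k / real k) \<longlonglongrightarrow> 1 / \<mu>"
      by (rule time_change[OF A B mu]) (simp_all add: c_def card_Suc_le)
    then have "eventually (\<lambda>k. dist (F k / real k) (1 / \<mu>) < \<epsilon>) sequentially"
      using eps by (rule tendstoD)
    then show ?case by (simp add: eventually_sequentially dist_real_def F_def)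
  qed
  moreover have "{x \<in> space (stream_space (count_space UNIV)). \<exists>K. \<forall>k\<ge>K. \<bar>Nhat (cntl L (stake k x)) / real k - 1 / \<mu>\<bar> < \<epsilon>}
      \<in> sets (stream_space (count_space UNIV))"
    by measurable
  ultimately show ?thesis
    unfolding \<mu>_def[symmetric] by (subst AE_distr_iff[OF obs_measurable_Sp]) simp_all
qed

lemma abs_contr: "\<bar>(a::real) - c\<bar> < \<bar>c - c'\<bar> / 2 \<Longrightarrow> \<bar>a - c'\<bar> < \<bar>c - c'\<bar> / 2 \<Longrightarrow> False"
  by (cases "c \<le> c'"; cases "a \<le> c"; cases "a \<le> c'") (simp_all add: abs_if split: if_splits)

lemma key:
  assumes L: "L \<ge> 1" and pv: "prob_vector L p" and pv': "prob_vector L p'"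
    and cons: "AE w in iid_law L p. (\<lambda>N. Nhat (obs_counts L w N) / real N) \<longlonglongrightarrow> 1"
    and cons': "AE w in iid_law L p'. (\<lambda>N. Nhat (obs_counts L w N) / real N) \<longlonglongrightarrow> 1"
    and q: "qvec L p = qvec L p'"
  shows "p (zero_pat L) = p' (zero_pat L)"
proof (rule ccontr)
  assume ne: "p (zero_pat L) \<noteq> p' (zero_pat L)"
  define c where "c = 1 / (1 - p (zero_pat L))"
  define c' where "c' = 1 / (1 - p' (zero_pat L))"
  have "1 - p (zero_pat L) > 0" "1 - p' (zero_pat L) > 0" using p0_less_1[OF pv L] p0_less_1[OF pv' L] by simp_all
  then have "c \<noteq> c'" using ne unfolding c_def c'_def by (simp add: field_simps)
  define \<epsilon> where "\<epsilon> = \<bar>c - c'\<bar> / 2"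
  have eps: "\<epsilon> > 0" using \<open>c \<noteq> c'\<close> by (simp add: \<epsilon>_def)
  have A1: "AE ob in Np L p. \<exists>K. \<forall>k\<ge>K. \<bar>Nhat (cntl L (stake k ob)) / real k - c\<bar> < \<epsilon>"
    unfolding c_def by (rule main_AE[OF pv L cons eps])
  have A2: "AE ob in Np L p'. \<exists>K. \<forall>k\<ge>K. \<bar>Nhat (cntl L (stake k ob)) / real k - c'\<bar> < \<epsilon>"
    unfolding c'_def by (rule main_AE[OF pv' L cons' eps])
  have eqN: "Np L p = Np L p'"
    by (rule Np_eq[OF pv pv' AE_infS[OF pv L] AE_infS[OF pv' L]]) (simp add: q)
  have A2': "AE ob in Np L p. \<exists>K. \<forall>k\<ge>K. \<bar>Nhat (cntl L (stake k ob)) / real k - c'\<bar> < \<epsilon>"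
    unfolding eqN by (rule A2)
  have "AE ob in Np L p. False"
    using A1 A2'
  proof eventually_elim
    case (elim ob)
    obtain K where K: "\<forall>k\<ge>K. \<bar>Nhat (cntl L (stake k ob)) / real k - c\<bar> < \<epsilon>" using elim(1) by blast
    obtain K' where K': "\<forall>k\<ge>K'. \<bar>Nhat (cntl L (stake k ob)) / real k - c'\<bar> < \<epsilon>" using elim(2) by blast
    have "\<bar>Nhat (cntl L (stake (max K K') ob)) / real (max K K') - c\<bar> < \<epsilon>"
         "\<bar>Nhat (cntl L (stake (max K K') ob)) / real (max K K') - c'\<bar> < \<epsilon>"
      using K K' by simp_all
    then show False unfolding \<epsilon>_def by (rule abs_contr)
  qed
  then show False
    using prob_space.AE_False[OF prob_space.prob_space_distr[OF prob_space_Sp obs_measurable_Sp]] by blast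
qed

theorem proposition1:
  fixes L :: nat and \<Theta> :: "(bool list \<Rightarrow> real) set"
  assumes "L \<ge> 2"
    and "\<forall>p\<in>\<Theta>. prob_vector L p"
    and "\<exists>Nhat. consistent_estimator L \<Theta> Nhat"
  shows "\<exists>f :: (bool list \<Rightarrow> real) \<Rightarrow> real. \<forall>p\<in>\<Theta>. p (zero_pat L) = f (qvec L p)"
proof -
  obtain Nhat where Nhat: "consistent_estimator L \<Theta> Nhat" using assms(3) by blast
  have L: "L \<ge> 1" using assms(1) by simp
  have k: "p (zero_pat L) = p' (zero_pat L)" if "p \<in> \<Theta>" "p' \<in> \<Theta>" "qvec L p = qvec L p'" for p p'
    using key[OF L _ _ _ _ that(3), of Nhat] assms(2) that Nhat unfolding consistent_estimator_def by blast
  define f where "f q = (SOME p. p \<in> \<Theta> \<and> qvec L p = q) (zero_pat L)" for q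
  show ?thesis
  proof (intro exI ballI)
    fix p assume p: "p \<in> \<Theta>"
    have "\<exists>p'. p' \<in> \<Theta> \<and> qvec L p' = qvec L p" using p by blast
    then have "(SOME p'. p' \<in> \<Theta> \<and> qvec L p' = qvec L p) \<in> \<Theta> \<and> qvec L (SOME p'. p' \<in> \<Theta> \<and> qvec L p' = qvec L p) = qvec L p"
      by (rule someI_ex)
    then show "p (zero_pat L) = f (qvec L p)"
      unfolding f_def using k[OF p] by metis
  qed
qed


end
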